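(* Let $K$ be an algebraically closed field of characteristic zero, $\mathcal{K} = K(t)$, $\alpha \in \mathcal{K}$, and integers $M \ge 2$, $N \ge 1$, $d \ge 2$. Then $\alpha$ realizes portrait $(M,N)$ for $f_d(z)=z^d+t$ if and only if $f_d^{M-1}(\alpha)$ realizes portrait $(1,N)$ for $f_d$.
   Context: For $c \in K$, let $f_{d,c}(z) = z^d+c$. A point $x$ has preperiodic portrait $(M,N)$ for a map $\phi$ if $M\ge0$ is minimal with $\phi^M(x)$ periodic and $\phi^M(x)$ has exact period $N$. We say $\beta \in \mathcal{K}$ realizes portrait $(M,N)$ for $f_d$ if there exists $c \in K$ such that the specialization $\beta(c)\in\mathbb{P}^1(K)$ (reduction modulo the place $t=c$) has portrait $(M,N)$ for $f_{d,c}$. *)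

theory Defs
  imports "HOL-Computational_Algebra.Polynomial" "HOL-Computational_Algebra.Fraction_Field"
begin

text \<open>Points of P^1(K): None is the point at infinity, Some z is z in K.\<close>

definition periodic_pt :: "('b \<Rightarrow> 'b) \<Rightarrow> 'b \<Rightarrow> bool" where
  "periodic_pt \<phi> x \<longleftrightarrow> (\<exists>n>0. (\<phi> ^^ n) x = x)"

definition exact_period :: "('b \<Rightarrow> 'b) \<Rightarrow> 'b \<Rightarrow> nat \<Rightarrow> bool" where
  "exact_period \<phi> x N \<longleftrightarrow> N > 0 \<and> (\<phi> ^^ N) x = x \<and> (\<forall>k. 0 < k \<and> k < N \<longrightarrow> (\<phi> ^^ k) x \<noteq> x)"

definition has_portrait :: "('b \<Rightarrow> 'b) \<Rightarrow> 'b \<Rightarrow> nat \<Rightarrow> nat \<Rightarrow> bool" where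
  "has_portrait \<phi> x M N \<longleftrightarrow>
     periodic_pt \<phi> ((\<phi> ^^ M) x) \<and> (\<forall>m<M. \<not> periodic_pt \<phi> ((\<phi> ^^ m) x)) \<and>
     exact_period \<phi> ((\<phi> ^^ M) x) N"

definition fdc :: "nat \<Rightarrow> 'a::field \<Rightarrow> 'a option \<Rightarrow> 'a option" where
  "fdc d c z = (case z of None \<Rightarrow> None | Some w \<Rightarrow> Some (w ^ d + c))"

definition tvar :: "'a::field poly fract" where
  "tvar = Fract [:0, 1:] 1"

definition fd :: "nat \<Rightarrow> 'a::field poly fract \<Rightarrow> 'a poly fract" where
  "fd d z = z ^ d + tvar"

text \<open>Specialization (reduction modulo the place t = c): if \<beta> lies in the local
  ring at c, i.e. \<beta> = p/q with q(c) \<noteq> 0, its value is p(c)/q(c); otherwise infinity.\<close>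
definition specialize :: "'a::field poly fract \<Rightarrow> 'a \<Rightarrow> 'a option" where
  "specialize \<beta> c =
     (if \<exists>p q. q \<noteq> 0 \<and> \<beta> = Fract p q \<and> poly q c \<noteq> 0
      then Some (SOME v. \<exists>p q. q \<noteq> 0 \<and> \<beta> = Fract p q \<and> poly q c \<noteq> 0 \<and> v = poly p c / poly q c)
      else None)"

definition realizes :: "nat \<Rightarrow> 'a::field poly fract \<Rightarrow> nat \<Rightarrow> nat \<Rightarrow> bool" where
  "realizes d \<beta> M N \<longleftrightarrow> (\<exists>c. has_portrait (fdc d c) (specialize \<beta> c) M N)"

end

theory Submission
  imports Defs
begin

lemma periodic_forward:
  assumes "periodic_pt \<phi> z" shows "periodic_pt \<phi> ((\<phi> ^^ k) z)"
proof -
  from assms obtain n where n: "n > 0" "(\<phi> ^^ n) z = z" unfolding periodic_pt_def by blast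
  have "(\<phi> ^^ n) ((\<phi> ^^ k) z) = (\<phi> ^^ k) ((\<phi> ^^ n) z)"
    by (metis comp_apply funpow_add add.commute)
  with n show ?thesis unfolding periodic_pt_def by auto
qed

lemma portrait_shift:
  assumes "M \<ge> 1"
  shows "has_portrait \<phi> x M N \<longleftrightarrow> has_portrait \<phi> ((\<phi> ^^ (M - 1)) x) 1 N"
proof -
  have eq: "(\<phi> ^^ M) x = (\<phi> ^^ 1) ((\<phi> ^^ (M - 1)) x)"
    using assms by (metis comp_apply funpow_add le_add_diff_inverse)
  have "(\<forall>m<M. \<not> periodic_pt \<phi> ((\<phi> ^^ m) x)) \<longleftrightarrow> \<not> periodic_pt \<phi> ((\<phi> ^^ (M - 1)) x)"
  proof
    assume "\<forall>m<M. \<not> periodic_pt \<phi> ((\<phi> ^^ m) x)"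
    then show "\<not> periodic_pt \<phi> ((\<phi> ^^ (M - 1)) x)" using assms by auto
  next
    assume h: "\<not> periodic_pt \<phi> ((\<phi> ^^ (M - 1)) x)"
    show "\<forall>m<M. \<not> periodic_pt \<phi> ((\<phi> ^^ m) x)"
    proof (intro allI impI notI)
      fix m assume "m < M" "periodic_pt \<phi> ((\<phi> ^^ m) x)"
      from this(2) have "periodic_pt \<phi> ((\<phi> ^^ (M - 1 - m)) ((\<phi> ^^ m) x))"
        by (rule periodic_forward)
      moreover have "(\<phi> ^^ (M - 1 - m)) ((\<phi> ^^ m) x) = (\<phi> ^^ (M - 1)) x"
      proof -
        have "M - 1 = (M - 1 - m) + m" using \<open>m < M\<close> by simp
        then show ?thesis by (metis comp_apply funpow_add)
      qed
      ultimately show False using h by simp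
    qed
  qed
  then show ?thesis unfolding has_portrait_def using eq by auto
qed

lemma spec_val:
  assumes "q \<noteq> 0" "poly q c \<noteq> 0"
  shows "specialize (Fract p q) c = Some (poly p c / poly q c)"
proof -
  have ex: "\<exists>p' q'. q' \<noteq> 0 \<and> Fract p q = Fract p' q' \<and> poly q' c \<noteq> 0" using assms by blast
  let ?P = "\<lambda>v. \<exists>p' q'. q' \<noteq> 0 \<and> Fract p q = Fract p' q' \<and> poly q' c \<noteq> 0 \<and> v = poly p' c / poly q' c"
  have "?P (poly p c / poly q c)" using assms by blast
  then have "?P (SOME v. ?P v)" by (rule someI)
  then obtain p' q' where h: "q' \<noteq> 0" "Fract p q = Fract p' q'" "poly q' c \<noteq> 0"
     "(SOME v. ?P v) = poly p' c / poly q' c" by blast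
  from h(1,2) assms(1) have "p * q' = p' * q" by (simp add: eq_fract)
  then have "poly p c * poly q' c = poly p' c * poly q c" by (metis poly_mult)
  then have "poly p' c / poly q' c = poly p c / poly q c"
    using h(3) assms(2) by (simp add: field_simps)
  then show ?thesis unfolding specialize_def using ex h(4) by simp
qed

lemma exists_good:
  fixes p q :: "'a::field poly"
  shows "q \<noteq> 0 \<Longrightarrow> \<exists>p' q'. q' \<noteq> 0 \<and> Fract p q = Fract p' q' \<and> (poly q' c \<noteq> 0 \<or> poly p' c \<noteq> 0)"
proof (induction "degree q" arbitrary: p q rule: less_induct)
  case less
  show ?case
  proof (cases "poly q c \<noteq> 0 \<or> poly p c \<noteq> 0")
    case True then show ?thesis using less.prems by blast
  next
    case False
    then obtain q' p' where q': "q = [:-c,1:] * q'" and p': "p = [:-c,1:] * p'"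
      by (metis poly_eq_0_iff_dvd dvdE)
    have "q' \<noteq> 0" using less.prems q' by auto
    have "degree q = 1 + degree q'" using \<open>q' \<noteq> 0\<close> unfolding q' by (subst degree_mult_eq) auto
    then have "degree q' < degree q" by simp
    from less.hyps[OF this \<open>q' \<noteq> 0\<close>, of p'] obtain p'' q'' where
      "q'' \<noteq> 0 \<and> Fract p' q' = Fract p'' q'' \<and> (poly q'' c \<noteq> 0 \<or> poly p'' c \<noteq> 0)" by blast
    moreover have "Fract p q = Fract p' q'" unfolding p' q' by (rule mult_fract_cancel) simp
    ultimately show ?thesis by metis
  qed
qed

lemma Fract_power: "Fract p q ^ n = Fract (p ^ n) (q ^ n)"
  by (induction n) (simp_all add: fract_collapse)

lemma fd_spec:
  fixes \<beta> :: "'a::field poly fract"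
  assumes "d \<ge> 1"
  shows "specialize (fd d \<beta>) c = fdc d c (specialize \<beta> c)"
proof (cases "\<exists>p q. q \<noteq> 0 \<and> \<beta> = Fract p q \<and> poly q c \<noteq> 0")
  case True
  then obtain p q where h: "q \<noteq> 0" "\<beta> = Fract p q" "poly q c \<noteq> 0" by blast
  have "fd d \<beta> = Fract (p ^ d * 1 + [:0,1:] * q ^ d) (q ^ d * 1)"
    unfolding fd_def tvar_def h(2) Fract_power using h(1) by simp
  then have "specialize (fd d \<beta>) c = Some ((poly p c ^ d + c * poly q c ^ d) / poly q c ^ d)"
    using spec_val[of "q ^ d * 1" c] h by (simp add: poly_power)
  also have "\<dots> = Some ((poly p c / poly q c) ^ d + c)"
    using h(3) by (simp add: field_simps power_divide)
  finally show ?thesis using spec_val[OF h(1) h(3)] h(2) by (simp add: fdc_def)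
next
  case False
  then have n: "specialize \<beta> c = None" unfolding specialize_def by simp
  obtain p0 q0 where "\<beta> = Fract p0 q0" "q0 \<noteq> 0" by (cases \<beta>) auto
  then obtain p q where h: "q \<noteq> 0" "\<beta> = Fract p q" "poly q c \<noteq> 0 \<or> poly p c \<noteq> 0"
    using exists_good by metis
  with False have qc: "poly q c = 0" and pc: "poly p c \<noteq> 0" by auto
  have "\<not> (\<exists>r s. s \<noteq> 0 \<and> fd d \<beta> = Fract r s \<and> poly s c \<noteq> 0)"
  proof
    assume "\<exists>r s. s \<noteq> 0 \<and> fd d \<beta> = Fract r s \<and> poly s c \<noteq> 0"
    then obtain r s where s: "s \<noteq> 0" "fd d \<beta> = Fract r s" "poly s c \<noteq> 0" by blast
    have "Fract (p ^ d) (q ^ d) = Fract r s - Fract [:0,1:] 1"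
      using s(2) unfolding fd_def tvar_def h(2) Fract_power by (simp add: algebra_simps)
    also have "\<dots> = Fract (r * 1 - [:0,1:] * s) (s * 1)" using s(1) by simp
    finally have "p ^ d * (s * 1) = (r * 1 - [:0,1:] * s) * q ^ d"
      using s(1) h(1) by (simp add: eq_fract)
    then have "poly (p ^ d * (s * 1)) c = poly ((r * 1 - [:0,1:] * s) * q ^ d) c" by simp
    then have "poly p c ^ d * poly s c = 0" using qc assms by (simp add: poly_power)
    then show False using pc s(3) by simp
  qed
  then have "specialize (fd d \<beta>) c = None" unfolding specialize_def by simp
  then show ?thesis using n by (simp add: fdc_def)
qed

lemma fd_iter_spec:
  fixes \<alpha> :: "'a::field poly fract"
  assumes "d \<ge> 1"
  shows "specialize ((fd d ^^ k) \<alpha>) c = (fdc d c ^^ k) (specialize \<alpha> c)"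
  by (induction k) (simp_all add: fd_spec[OF assms])

theorem lemma3p3:
  fixes \<alpha> :: "'a::{alg_closed_field, field_char_0} poly fract"
    and M N d :: nat
  assumes "M \<ge> 2" and "N \<ge> 1" and "d \<ge> 2"
  shows "realizes d \<alpha> M N \<longleftrightarrow> realizes d ((fd d ^^ (M - 1)) \<alpha>) 1 N"
proof -
  have "\<And>c. has_portrait (fdc d c) (specialize \<alpha> c) M N \<longleftrightarrow>
     has_portrait (fdc d c) (specialize ((fd d ^^ (M - 1)) \<alpha>) c) 1 N"
    using portrait_shift[of M "fdc d c" "specialize \<alpha> c" N for c] fd_iter_spec[of d "M-1" \<alpha>] assms
    by simp
  then show ?thesis unfolding realizes_def by simp
qed

end
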